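(* Let $k,d$ be positive integers with $d\equiv0\pmod k$. There exists $n_0=n_0(d,k)$ such that for every $n\ge n_0$, $p(n,k,d)=\binom{n}{\le d/k}$. Moreover, for such $n$ the only $k$-wise $(n-d)$-union family $\mathcal{F}\subset2^{[n]}$ of size $\binom{n}{\le d/k}$ is $\binom{[n]}{\le d/k}$.
   Context: $[n]=\{1,\dots,n\}$. $\binom{[n]}{\le t}=\{S\subset[n]:|S|\le t\}$ and $\binom{n}{\le t}$ is its size. A family $\mathcal{F}\subset2^{[n]}$ is $k$-wise $(n-d)$-union if $|S_1\cup\cdots\cup S_k|\le d$ for all (not necessarily distinct) $S_1,\dots,S_k\in\mathcal{F}$. $p(n,k,d)$ is the maximum size of a $k$-wise $(n-d)$-union family $\mathcal{F}\subset2^{[n]}$. *)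

theory Defs
  imports Main
begin

definition subsets_le :: "nat \<Rightarrow> nat \<Rightarrow> nat set set" where
  "subsets_le n t = {S. S \<subseteq> {1..n} \<and> card S \<le> t}"

text \<open>F \<subseteq> 2^[n] is k-wise (n-d)-union: the union of any k (not necessarily
  distinct) members has size at most d.\<close>
definition kwise_union :: "nat \<Rightarrow> nat \<Rightarrow> nat \<Rightarrow> nat set set \<Rightarrow> bool" where
  "kwise_union n k d F \<longleftrightarrow> F \<subseteq> Pow {1..n} \<and>
     (\<forall>S :: nat \<Rightarrow> nat set. (\<forall>i<k. S i \<in> F) \<longrightarrow> card (\<Union>i<k. S i) \<le> d)"

definition p :: "nat \<Rightarrow> nat \<Rightarrow> nat \<Rightarrow> nat" where
  "p n k d = Max {card F | F. kwise_union n k d F}"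

end

theory Submission
  imports Defs Complex_Main
begin

lemma card_subsets_le: "card (subsets_le n s) = (\<Sum>i\<le>s. n choose i)"
proof (induction s)
  case 0
  have "subsets_le n 0 = {{}}" by (auto simp: subsets_le_def card_eq_0_iff dest: finite_subset)
  then show ?case by simp
next
  case (Suc s)
  have eq: "subsets_le n (Suc s) = subsets_le n s \<union> {S. S \<subseteq> {1..n} \<and> card S = Suc s}"
    by (auto simp: subsets_le_def)
  have "card (subsets_le n (Suc s)) = card (subsets_le n s) + card {S. S \<subseteq> {1..n} \<and> card S = Suc s}"
    unfolding eq
    by (rule card_Un_disjoint) (auto simp: subsets_le_def intro: finite_subset[of _ "Pow {1..n}"])
  also have "card {S. S \<subseteq> {1..n} \<and> card S = Suc s} = n choose Suc s"
    using n_subsets[of "{1..n}" "Suc s"] by simp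
  finally show ?case using Suc by simp
qed

lemma count_ineq:
  fixes t n M :: nat
  assumes t: "t > 0" and n: "n \<ge> t*t*M + 2*t"
  shows "M * card (subsets_le n (t-1)) < card (subsets_le n t)"
proof -
  define c where "c = n choose (t-1)"
  have cpos: "c > 0" unfolding c_def using n by simp
  have "(\<Sum>i\<le>t-1. n choose i) \<le> (\<Sum>i\<le>t-1. c)"
    by (rule sum_mono) (use n in \<open>auto simp: c_def intro!: binomial_mono\<close>)
  also have "\<dots> = t * c" using t by simp
  finally have S: "card (subsets_le n (t-1)) \<le> t * c" by (simp add: card_subsets_le)
  have tt: "t = Suc (t-1)" using t by simp
  have key: "t * (n choose t) = (n - (t-1)) * c"
    unfolding c_def using times_binomial_minus1_eq[of t n] t
    by (metis binomial_absorb_comp Suc_times_binomial_eq tt mult.commute nat_mult_eq_cancel_disj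
        binomial_absorption Suc_diff_le diff_Suc_1)
  have "t * (M * card (subsets_le n (t-1))) \<le> t * (M * (t * c))"
    using S by simp
  also have "\<dots> = (t*t*M) * c" by simp
  also have "\<dots> < (n - (t-1)) * c"
  proof -
    have "t*t*M < n - (t-1)" using n t by linarith
    then show ?thesis using cpos by simp
  qed
  also have "\<dots> = t * (n choose t)" using key by simp
  finally have "M * card (subsets_le n (t-1)) < n choose t" by simp
  also have "n choose t \<le> card (subsets_le n t)"
    using tt card_subsets_le[of n t] by (metis atMost_iff le_refl sum_nonneg_leq_bound zero_le finite_atMost)
  finally show ?thesis .
qed

lemma key:
  fixes t n :: nat
  assumes t: "t > 0"
  shows "kwise_union n (Suc j) (Suc j * t) F \<Longrightarrow> A \<in> F \<Longrightarrow> card A > t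
         \<Longrightarrow> card F \<le> 2^(Suc j * t) * card (subsets_le n (t-1))"
proof (induction j)
  case 0
  then have "card (\<Union>i<Suc 0. (\<lambda>_. A) i) \<le> Suc 0 * t"
    unfolding kwise_union_def by (metis (no_types, lifting))
  then show ?case using 0 by (simp add: lessThan_Suc)
next
  case (Suc j)
  define m where "m = Suc j"
  have kw: "kwise_union n (Suc m) (Suc m * t) F" using Suc.prems m_def by simp
  have FP: "F \<subseteq> Pow {1..n}" using kw unfolding kwise_union_def by blast
  show ?case
  proof (cases "\<exists>S. (\<forall>i<m. S i \<in> F) \<and> card (\<Union>i<m. S i) > m * t")
    case False
    then have "kwise_union n m (m * t) F" using FP unfolding kwise_union_def by (auto simp: not_less)
    then have "card F \<le> 2^(m * t) * card (subsets_le n (t-1))"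
      using Suc.IH Suc.prems m_def by simp
    also have "\<dots> \<le> 2^(Suc m * t) * card (subsets_le n (t-1))" by simp
    finally show ?thesis using m_def by simp
  next
    case True
    then obtain S where S: "\<forall>i<m. S i \<in> F" and big: "card (\<Union>i<m. S i) > m * t" by blast
    define U where "U = (\<Union>i<m. S i)"
    have UP: "U \<subseteq> {1..n}" using S FP unfolding U_def by blast
    have fU: "finite U" using UP finite_subset by blast
    have un: "card (U \<union> B) \<le> Suc m * t" if B: "B \<in> F" for B
    proof -
      define S' where "S' = S(m := B)"
      have "(\<Union>i<Suc m. S' i) = U \<union> B"
        unfolding U_def S'_def lessThan_Suc by auto
      moreover have "\<forall>i<Suc m. S' i \<in> F" using S B unfolding S'_def by (auto simp: less_Suc_eq)
      ultimately show ?thesis using kw unfolding kwise_union_def by metis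
    qed
    have Usmall: "card U \<le> Suc m * t"
      using un[OF Suc.prems(2)] card_mono[of "U \<union> A" U] FP Suc.prems(2) fU
      by (meson Un_upper1 dual_order.trans finite_Un finite_subset finite_atLeastAtMost PowD subsetD)
    have diff: "card (B - U) \<le> t - 1" if B: "B \<in> F" for B
    proof -
      have fB: "finite B" using B FP finite_subset by blast
      have "U \<union> B = U \<union> (B - U)" by blast
      then have "card (U \<union> B) = card U + card (B - U)"
        using card_Un_disjoint[of U "B - U"] fU fB by auto
      then show ?thesis using un[OF B] big unfolding U_def by simp
    qed
    define G where "G = Pow U \<times> subsets_le n (t-1)"
    have "inj_on (\<lambda>B. (B \<inter> U, B - U)) F"
      by (rule inj_onI) (metis (no_types, lifting) Int_Diff_Un prod.inject)
    moreover have "(\<lambda>B. (B \<inter> U, B - U)) ` F \<subseteq> G"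
      using diff FP unfolding G_def subsets_le_def by auto
    moreover have "finite G" unfolding G_def subsets_le_def using fU
      by (auto intro: finite_subset[of _ "Pow {1..n}"])
    ultimately have "card F \<le> card G" by (rule card_inj_on_le)
    also have "card G = 2 ^ card U * card (subsets_le n (t-1))"
      unfolding G_def by (simp add: card_cartesian_product card_Pow fU)
    also have "\<dots> \<le> 2^(Suc m * t) * card (subsets_le n (t-1))"
      using Usmall by simp
    finally show ?thesis using m_def by simp
  qed
qed

theorem proposition9:
  fixes k d :: nat
  assumes "k > 0" and "d > 0" and "k dvd d"
  shows "\<exists>n0. \<forall>n\<ge>n0.
           p n k d = card (subsets_le n (d div k)) \<and>
           (\<forall>F. kwise_union n k d F \<and> card F = card (subsets_le n (d div k))
                \<longrightarrow> F = subsets_le n (d div k))"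
proof -
  define t where "t = d div k"
  obtain j where kj: "k = Suc j" using assms(1) gr0_implies_Suc by blast
  have dkt: "d = Suc j * t" using assms(3) kj unfolding t_def by (metis dvd_mult_div_cancel)
  have t: "t > 0" using dkt assms(2) by (metis mult_0_right neq0_conv)
  define M where "M = (2::nat)^(Suc j * t)"
  show ?thesis
  proof (intro exI allI impI)
    fix n assume n: "n \<ge> t*t*M + 2*t"
    have fin: "finite (subsets_le n t)" unfolding subsets_le_def
      by (auto intro: finite_subset[of _ "Pow {1..n}"])
    have full: "kwise_union n k d (subsets_le n t)"
      unfolding kwise_union_def
    proof (intro conjI allI impI)
      show "subsets_le n t \<subseteq> Pow {1..n}" unfolding subsets_le_def by auto
      fix S :: "nat \<Rightarrow> nat set" assume S: "\<forall>i<k. S i \<in> subsets_le n t"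
      have "card (\<Union>i<k. S i) \<le> (\<Sum>i<k. card (S i))" by (rule card_UN_le) simp
      also have "\<dots> \<le> (\<Sum>i<k. t)" by (rule sum_mono) (use S in \<open>auto simp: subsets_le_def\<close>)
      finally show "card (\<Union>i<k. S i) \<le> d" using dkt kj by simp
    qed
    have bound: "card F \<le> card (subsets_le n t) \<and> (card F = card (subsets_le n t) \<longrightarrow> F = subsets_le n t)"
      if F: "kwise_union n k d F" for F
    proof (cases "\<exists>A\<in>F. card A > t")
      case True
      then obtain A where "A \<in> F" "card A > t" by blast
      then have "card F \<le> M * card (subsets_le n (t-1))"
        using key[OF t, of n j F A] F dkt kj M_def by simp
      also have "\<dots> < card (subsets_le n t)" by (rule count_ineq[OF t n])
      finally show ?thesis by simp
    next
      case False
      then have sub: "F \<subseteq> subsets_le n t" using F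
        unfolding kwise_union_def subsets_le_def by (auto simp: not_less)
      then have "card F \<le> card (subsets_le n t)" using card_mono fin by blast
      moreover have "card F = card (subsets_le n t) \<longrightarrow> F = subsets_le n t"
        using card_subset_eq[OF fin sub] by blast
      ultimately show ?thesis by blast
    qed
    have "p n k d = card (subsets_le n t)"
      unfolding p_def
    proof (rule Max_eqI)
      have "{card F |F. kwise_union n k d F} \<subseteq> {..card (subsets_le n t)}"
        using bound by auto
      then show "finite {card F |F. kwise_union n k d F}" using finite_subset by blast
      show "\<And>y. y \<in> {card F |F. kwise_union n k d F} \<Longrightarrow> y \<le> card (subsets_le n t)"
        using bound by auto
      show "card (subsets_le n t) \<in> {card F |F. kwise_union n k d F}" using full by blast
    qed
    then show "p n k d = card (subsets_le n (d div k)) \<and>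
           (\<forall>F. kwise_union n k d F \<and> card F = card (subsets_le n (d div k))
                \<longrightarrow> F = subsets_le n (d div k))"
      using bound unfolding t_def by blast
  qed
qed

end
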